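(* Let $(X,\mathrm{dist})$ be a metric space, let $d\in\mathbb{N}$ and $\eta>0$. Suppose $\{f_i\}_{i\in I}$ is a partition of unity for $X$ such that (1) for any subset $F\subseteq I$ of cardinality greater than $d+1$, $\prod_{i\in F}f_i=0$; and (2) each $f_i$ is Lipschitz with constant $\eta$. Then for any $r\in\big[0,\frac{1}{\eta(d+1)}\big)$ there is a partition of unity $\{g_i\}_{i\in I}$ for $X$ such that (3) for any $i\in I$, $N_r(\mathrm{supp}(g_i))\subseteq\mathrm{supp}(f_i)^{o}$; and (4) each $g_i$ is Lipschitz with constant $\dfrac{(d+2)\eta}{(1-(d+1)\eta r)^2}$.
   Context: A partition of unity for $X$ is a family of continuous functions $f_i\colon X\to[0,\infty)$ whose supports are contained in a locally finite family of open sets and with $\sum_i f_i(x)=1$ for all $x\in X$. $\mathrm{supp}$ is the closed support, $S^{o}$ the interior of $S$, and $N_r(S)=\{x\in X:\mathrm{dist}(x,S)<r\}$. *)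

theory Defs
  imports "HOL-Analysis.Analysis"
begin

definition csupp :: "('a::topological_space \<Rightarrow> real) \<Rightarrow> 'a set" where
  "csupp g = closure {x. g x \<noteq> 0}"

text \<open>Open r-neighbourhood N_r(S) = {x. dist(x,S) < r}; written without infdist so that
  N_r of the empty set is empty (dist(x, empty) = infinity).\<close>
definition nbhd :: "real \<Rightarrow> 'a::metric_space set \<Rightarrow> 'a set" where
  "nbhd r S = {x. \<exists>y\<in>S. dist x y < r}"

definition locally_finite_family :: "'i set \<Rightarrow> ('i \<Rightarrow> 'a::topological_space set) \<Rightarrow> bool" where
  "locally_finite_family I U \<longleftrightarrow>
     (\<forall>x. \<exists>V. open V \<and> x \<in> V \<and> finite {i\<in>I. U i \<inter> V \<noteq> {}})"

definition partition_of_unity :: "'i set \<Rightarrow> ('i \<Rightarrow> 'a::topological_space \<Rightarrow> real) \<Rightarrow> bool" where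
  "partition_of_unity I f \<longleftrightarrow>
     (\<forall>i\<in>I. continuous_on UNIV (f i) \<and> (\<forall>x. 0 \<le> f i x)) \<and>
     (\<exists>U. (\<forall>i\<in>I. open (U i) \<and> csupp (f i) \<subseteq> U i) \<and> locally_finite_family I U) \<and>
     (\<forall>x. finite {i\<in>I. f i x \<noteq> 0} \<and> (\<Sum>i\<in>{i\<in>I. f i x \<noteq> 0}. f i x) = 1)"

end

theory Submission
  imports Defs
begin

theorem lemma4p5:
  fixes f :: "'i \<Rightarrow> 'a::metric_space \<Rightarrow> real" and I :: "'i set"
    and d :: nat and \<eta> r :: real
  assumes "\<eta> > 0"
    and "partition_of_unity I f"
    and "\<And>F x. F \<subseteq> I \<Longrightarrow> finite F \<Longrightarrow> card F > d + 1 \<Longrightarrow> (\<Prod>i\<in>F. f i x) = 0"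
    and "\<And>i. i \<in> I \<Longrightarrow> \<eta>-lipschitz_on UNIV (f i)"
    and "0 \<le> r" and "r < 1 / (\<eta> * (real d + 1))"
  shows "\<exists>g :: 'i \<Rightarrow> 'a \<Rightarrow> real. partition_of_unity I g \<and>
           (\<forall>i\<in>I. nbhd r (csupp (g i)) \<subseteq> interior (csupp (f i))) \<and>
           (\<forall>i\<in>I. ((real d + 2) * \<eta> / (1 - (real d + 1) * \<eta> * r)^2)-lipschitz_on UNIV (g i))"
proof -
  define c where "c = (real d + 1) * \<eta> * r"
  have c0: "0 \<le> c" unfolding c_def using assms(1,5) by simp
  have "r * (\<eta> * (real d + 1)) < 1"
    using assms(6) assms(1) by (simp add: less_divide_eq)
  hence c1: "c < 1" unfolding c_def by (simp add: algebra_simps)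
  have er0: "0 \<le> \<eta> * r" using assms(1,5) by simp
  have fpos: "\<And>i x. i \<in> I \<Longrightarrow> 0 \<le> f i x" and fcont: "\<And>i. i \<in> I \<Longrightarrow> continuous_on UNIV (f i)"
    using assms(2) unfolding partition_of_unity_def by auto
  obtain U where U: "\<forall>i\<in>I. open (U i) \<and> csupp (f i) \<subseteq> U i" "locally_finite_family I U"
    using assms(2) unfolding partition_of_unity_def by auto
  define N where "N x = {j\<in>I. f j x \<noteq> 0}" for x
  have finN: "\<And>x. finite (N x)" and sumN: "\<And>x. (\<Sum>j\<in>N x. f j x) = 1"
    using assms(2) unfolding partition_of_unity_def N_def by auto
  have cardN: "card (N x) \<le> d + 1" for x
  proof (rule ccontr)
    assume "\<not> card (N x) \<le> d + 1"
    hence "(\<Prod>i\<in>N x. f i x) = 0" using assms(3)[of "N x" x] finN unfolding N_def by auto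
    thus False using finN[of x] unfolding N_def by auto
  qed
  have lipf: "\<And>i x y. i \<in> I \<Longrightarrow> \<bar>f i x - f i y\<bar> \<le> \<eta> * dist x y"
    using lipschitz_onD[OF assms(4)] by (simp add: dist_real_def)
  define h where "h i x = max 0 (f i x - \<eta> * r)" for i x
  define S where "S x = (\<Sum>j\<in>N x. h j x)" for x
  have h0: "\<And>i x. 0 \<le> h i x" unfolding h_def by simp
  have hle: "\<And>i x. i \<in> I \<Longrightarrow> h i x \<le> f i x" unfolding h_def using fpos er0 by auto
  have hlip: "\<And>i x y. i \<in> I \<Longrightarrow> \<bar>h i x - h i y\<bar> \<le> \<eta> * dist x y"
  proof -
    fix i x y assume "i \<in> I"
    from lipf[OF this, of x y] show "\<bar>h i x - h i y\<bar> \<le> \<eta> * dist x y"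
      unfolding h_def using assms(1) by (auto simp: max_def abs_if)
  qed
  have hz: "\<And>i x. f i x = 0 \<Longrightarrow> h i x = 0" unfolding h_def using er0 by auto
  have Slow: "1 - c \<le> S x" for x
  proof -
    have "(\<Sum>j\<in>N x. f j x - \<eta> * r) \<le> S x" unfolding S_def
      by (rule sum_mono) (simp add: h_def)
    moreover have "(\<Sum>j\<in>N x. f j x - \<eta> * r) = 1 - real (card (N x)) * (\<eta> * r)"
      by (simp add: sum_subtractf sumN)
    moreover have "real (card (N x)) * (\<eta> * r) \<le> (real d + 1) * (\<eta> * r)"
      using cardN[of x] er0 by (intro mult_right_mono) auto
    ultimately show ?thesis unfolding c_def by (simp add: algebra_simps)
  qed
  have Sup: "S x \<le> 1" for x
  proof -
    have "S x \<le> (\<Sum>j\<in>N x. f j x)" unfolding S_def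
      by (rule sum_mono) (auto simp: N_def hle)
    thus ?thesis using sumN by simp
  qed
  have Spos: "0 < S x" for x using Slow[of x] c1 by linarith
  have hS: "h i x \<le> S x" if "i \<in> I" for i x
  proof (cases "i \<in> N x")
    case True
    then show ?thesis unfolding S_def
      by (intro member_le_sum) (auto simp: h0 finN)
  next
    case False
    then have "h i x = 0" using that hz unfolding N_def by auto
    then show ?thesis using Spos[of x] by simp
  qed
  have Slip: "\<bar>S x - S y\<bar> \<le> (real d + 1) * \<eta> * dist x y" for x y
  proof (cases "dist x y < r")
    case True
    have red: "S u = (\<Sum>j\<in>N x \<inter> N y. h j u)" if "u = x \<and> v = y \<or> u = y \<and> v = x" for u v
    proof -
      have "S u = (\<Sum>j\<in>N u. h j u)" by (simp add: S_def)
      also have "\<dots> = (\<Sum>j\<in>N u \<inter> N v. h j u)"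
      proof (rule sum.mono_neutral_right)
        show "finite (N u)" by (rule finN)
        show "N u \<inter> N v \<subseteq> N u" by auto
        show "\<forall>j\<in>N u - N u \<inter> N v. h j u = 0"
        proof
          fix j assume j: "j \<in> N u - N u \<inter> N v"
          hence jI: "j \<in> I" and fv: "f j v = 0" unfolding N_def by auto
          have "\<bar>f j u - f j v\<bar> \<le> \<eta> * dist u v" by (rule lipf[OF jI])
          moreover have "\<eta> * dist u v < \<eta> * r"
            using True that assms(1) by (auto simp: dist_commute)
          ultimately have "f j u < \<eta> * r" using fv by simp
          thus "h j u = 0" unfolding h_def by simp
        qed
      qed
      also have "N u \<inter> N v = N x \<inter> N y" using that by auto
      finally show ?thesis .
    qed
    have "\<bar>S x - S y\<bar> = \<bar>\<Sum>j\<in>N x \<inter> N y. h j x - h j y\<bar>"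
      using red[of x y] red[of y x] by (simp add: sum_subtractf)
    also have "\<dots> \<le> (\<Sum>j\<in>N x \<inter> N y. \<bar>h j x - h j y\<bar>)" by (rule sum_abs)
    also have "\<dots> \<le> (\<Sum>j\<in>N x \<inter> N y. \<eta> * dist x y)"
      by (rule sum_mono) (auto simp: N_def hlip)
    also have "\<dots> = real (card (N x \<inter> N y)) * (\<eta> * dist x y)" by simp
    also have "\<dots> \<le> (real d + 1) * (\<eta> * dist x y)"
    proof (rule mult_right_mono)
      have "card (N x \<inter> N y) \<le> card (N x)" by (rule card_mono[OF finN]) auto
      thus "real (card (N x \<inter> N y)) \<le> real d + 1" using cardN[of x] by linarith
      show "0 \<le> \<eta> * dist x y" using assms(1) by simp
    qed
    finally show ?thesis by (simp add: algebra_simps)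
  next
    case False
    have "\<bar>S x - S y\<bar> \<le> c" using Slow[of x] Slow[of y] Sup[of x] Sup[of y] by linarith
    also have "c \<le> (real d + 1) * \<eta> * dist x y" unfolding c_def
      using False assms(1) by (intro mult_left_mono) auto
    finally show ?thesis .
  qed
  define L where "L = (real d + 2) * \<eta> / (1 - (real d + 1) * \<eta> * r)^2"
  define g where "g i x = h i x / S x" for i x
  have glip: "L-lipschitz_on UNIV (g i)" if iI: "i \<in> I" for i
  proof (rule lipschitz_onI)
    have den: "0 < 1 - c" "1 - c \<le> 1" using c0 c1 by auto
    have Lc: "L = (real d + 2) * \<eta> / (1 - c)^2" unfolding L_def c_def by simp
    show "0 \<le> L" unfolding Lc using assms(1) by simp
    fix x y :: 'a
    define \<delta> where "\<delta> = dist x y"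
    have d0: "0 \<le> \<delta>" unfolding \<delta>_def by simp
    have Sx: "0 < S x" "0 < S y" using Spos by auto
    have eq: "g i x - g i y = (h i x - h i y) / S x + (h i y / S y) * ((S y - S x) / S x)"
      unfolding g_def using Sx by (simp add: field_simps)
    have q1: "\<bar>h i y / S y\<bar> \<le> 1" using hS[OF iI, of y] h0[of i y] Sx by simp
    have "\<bar>g i x - g i y\<bar> \<le> \<bar>h i x - h i y\<bar> / S x + \<bar>h i y / S y\<bar> * (\<bar>S y - S x\<bar> / S x)"
      unfolding eq using Sx by (simp add: abs_mult abs_triangle_ineq[THEN order_trans])
    also have "\<dots> \<le> \<eta> * \<delta> / S x + 1 * ((real d + 1) * \<eta> * \<delta> / S x)"
    proof (intro add_mono mult_mono divide_right_mono)
      show "\<bar>h i x - h i y\<bar> \<le> \<eta> * \<delta>" unfolding \<delta>_def by (rule hlip[OF iI])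
      show "\<bar>S y - S x\<bar> \<le> (real d + 1) * \<eta> * \<delta>" unfolding \<delta>_def
        using Slip[of y x] by (simp add: dist_commute)
    qed (use q1 Sx in auto)
    also have "\<dots> = (real d + 2) * \<eta> * \<delta> / S x" using Sx by (simp add: field_simps add_divide_distrib[symmetric])
    also have "\<dots> \<le> (real d + 2) * \<eta> * \<delta> / (1 - c)"
      using Slow[of x] den assms(1) d0 by (intro divide_left_mono) auto
    also have "\<dots> \<le> (real d + 2) * \<eta> * \<delta> / (1 - c)^2"
    proof (intro divide_left_mono)
      show "(1 - c)^2 \<le> 1 - c" using den by (simp add: power2_eq_square mult_le_cancel_right1 )
    qed (use den assms(1) d0 in auto)
    also have "\<dots> = L * \<delta>" unfolding Lc by simp
    finally show "dist (g i x) (g i y) \<le> L * dist x y" unfolding \<delta>_def by (simp add: dist_real_def)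
  qed
  have gsub: "{x. g i x \<noteq> 0} \<subseteq> {x. \<eta> * r < f i x}" for i
    unfolding g_def h_def by auto
  have pou: "partition_of_unity I g"
    unfolding partition_of_unity_def
  proof (intro conjI ballI allI)
    fix i assume "i \<in> I"
    show "continuous_on UNIV (g i)" by (rule lipschitz_on_continuous_on[OF glip[OF \<open>i \<in> I\<close>]])
  next
    fix i x show "0 \<le> g i x" unfolding g_def using h0[of i x] Spos[of x] by simp
  next
    show "\<exists>U. (\<forall>i\<in>I. open (U i) \<and> csupp (g i) \<subseteq> U i) \<and> locally_finite_family I U"
    proof (intro exI conjI ballI)
      fix i assume i: "i \<in> I"
      show "open (U i)" using U i by auto
      have "{x. g i x \<noteq> 0} \<subseteq> {x. f i x \<noteq> 0}" using gsub[of i] er0 by force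
      hence "csupp (g i) \<subseteq> csupp (f i)" unfolding csupp_def by (rule closure_mono)
      thus "csupp (g i) \<subseteq> U i" using U i by auto
    qed (rule U(2))
  next
    fix x
    have sub: "{i\<in>I. g i x \<noteq> 0} \<subseteq> N x" unfolding N_def using gsub er0 by force
    show "finite {i\<in>I. g i x \<noteq> 0}" by (rule finite_subset[OF sub finN])
    have "(\<Sum>i\<in>{i\<in>I. g i x \<noteq> 0}. g i x) = (\<Sum>i\<in>N x. g i x)"
      by (rule sum.mono_neutral_left[OF finN sub]) (auto simp: N_def)
    also have "\<dots> = S x / S x" unfolding g_def by (simp only: sum_divide_distrib[symmetric] S_def)
    also have "\<dots> = 1" using Spos[of x] by simp
    finally show "(\<Sum>i\<in>{i\<in>I. g i x \<noteq> 0}. g i x) = 1" .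
  qed
  have nb: "nbhd r (csupp (g i)) \<subseteq> interior (csupp (f i))" if iI: "i \<in> I" for i
  proof
    fix x assume "x \<in> nbhd r (csupp (g i))"
    then obtain y where y: "y \<in> closure {x. g i x \<noteq> 0}" "dist x y < r"
      unfolding nbhd_def csupp_def by auto
    have cl: "closed {x. \<eta> * r \<le> f i x}"
      by (rule closed_Collect_le[OF continuous_on_const fcont[OF iI]])
    have "closure {x. g i x \<noteq> 0} \<subseteq> {x. \<eta> * r \<le> f i x}"
      by (rule closure_minimal[OF _ cl]) (use gsub[of i] in force)
    with y have fy: "\<eta> * r \<le> f i y" by auto
    have "\<bar>f i x - f i y\<bar> \<le> \<eta> * dist x y" by (rule lipf[OF iI])
    moreover have "\<eta> * dist x y < \<eta> * r" using y(2) assms(1) by simp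
    ultimately have fx: "0 < f i x" using fy by linarith
    have op: "open {x. 0 < f i x}"
      by (rule open_Collect_less[OF continuous_on_const fcont[OF iI]])
    have "{x. 0 < f i x} \<subseteq> csupp (f i)" unfolding csupp_def
      using closure_subset by force
    with op fx show "x \<in> interior (csupp (f i))" by (meson interior_maximal mem_Collect_eq subsetD)
  qed
  show ?thesis
    by (rule exI[of _ g]) (use pou nb glip in \<open>auto simp: L_def\<close>)
qed

end
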